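(* Let $v:\mathbb X\times\mathbb X\to[0,\infty]$ be a measurable symmetric pair potential, $z:\mathbb X\to[0,\infty)$ measurable with $\int_Bz\,d\lambda<\infty$ for all $B\in\mathcal X_{\mathsf b}$, and $\mathsf P\in\mathscr G(z)$. Let $h:\mathbb X\to[0,\infty)$ be measurable with $\int_{\mathbb X}h\,d\lambda_z<\infty$, and let $\mathsf P_h$ be the probability measure absolutely continuous with respect to $\mathsf P$ with $$\frac{d\mathsf P_h}{d\mathsf P}(\eta)=\frac{\exp(-\int_{\mathbb X}h\,d\eta)}{\int_{\mathcal N}\exp(-\int_{\mathbb X}h\,d\gamma)\,d\mathsf P(\gamma)}.$$ Then $\mathsf P_h\in\mathscr G(ze^{-h})$.
   Context: $(\mathbb X,\mathrm{dist})$ complete separable metric space with Borel $\sigma$-algebra $\mathcal X$, $\mathcal X_{\mathsf b}$ bounded Borel sets, $\lambda$ a measure finite on bounded sets, $\lambda_z(dx)=z(x)\lambda(dx)$. $\mathcal N$ is the set of locally finite counting measures on $\mathbb X$ with the $\sigma$-algebra $\mathfrak N$ generated by $\eta\mapsto\eta(B)$, $B\in\mathcal X_{\mathsf b}$. $W(x;\eta)=\int v(x,y)\,d\eta(y)$. For an activity $\zeta:\mathbb X\to[0,\infty)$, $\mathscr G(\zeta)$ is the set of probability measures $\mathsf Q$ on $(\mathcal N,\mathfrak N)$ with $\mathsf E_{\mathsf Q}[\int F(x,\eta)\,d\eta(x)]=\int\mathsf E_{\mathsf Q}[F(x,\eta+\delta_x)e^{-W(x;\eta)}]\zeta(x)\,d\lambda(x)$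 for all measurable $F:\mathbb X\times\mathcal N\to[0,\infty)$. *)

theory Defs
  imports "HOL-Probability.Probability"
begin

definition count_meas :: "'a::polish_space measure set" where
  "count_meas = {\<eta>. sets \<eta> = sets borel \<and>
      (\<forall>B\<in>sets borel. bounded B \<longrightarrow> (\<exists>n::nat. emeasure \<eta> B = of_nat n))}"

definition Nspace :: "'a::polish_space measure measure" where
  "Nspace = sigma count_meas
     {{\<eta>\<in>count_meas. emeasure \<eta> B \<in> A} | B A.
        B \<in> sets borel \<and> bounded B \<and> A \<in> sets (borel :: ennreal measure)}"

definition add_point :: "'a::polish_space measure \<Rightarrow> 'a \<Rightarrow> 'a measure" where
  "add_point \<eta> x = measure_of UNIV (sets borel) (\<lambda>A. emeasure \<eta> A + indicator A x)"

definition exp_neg :: "ennreal \<Rightarrow> ennreal" where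
  "exp_neg t = (if t = \<infinity> then 0 else ennreal (exp (- enn2real t)))"

definition Wpot :: "('a \<Rightarrow> 'a \<Rightarrow> ennreal) \<Rightarrow> 'a \<Rightarrow> 'a measure \<Rightarrow> ennreal" where
  "Wpot v x \<eta> = (\<integral>\<^sup>+ y. v x y \<partial>\<eta>)"

text \<open>The set of Gibbs measures G(zeta) (via the GNZ equation).\<close>
definition Gibbs :: "('a::polish_space \<Rightarrow> 'a \<Rightarrow> ennreal) \<Rightarrow> 'a measure \<Rightarrow> ('a \<Rightarrow> real)
     \<Rightarrow> 'a measure measure \<Rightarrow> bool" where
  "Gibbs v lam \<zeta> Q \<longleftrightarrow> prob_space Q \<and> sets Q = sets Nspace \<and>
     (\<forall>F :: 'a \<Rightarrow> 'a measure \<Rightarrow> ennreal.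
        (\<lambda>(x, \<eta>). F x \<eta>) \<in> borel_measurable (borel \<Otimes>\<^sub>M Nspace) \<longrightarrow>
        (\<integral>\<^sup>+ \<eta>. (\<integral>\<^sup>+ x. F x \<eta> \<partial>\<eta>) \<partial>Q) =
        (\<integral>\<^sup>+ x. (\<integral>\<^sup>+ \<eta>. F x (add_point \<eta> x) * exp_neg (Wpot v x \<eta>) \<partial>Q) * ennreal (\<zeta> x) \<partial>lam))"

end

theory Submission
  imports Defs
begin

lemma space_Nspace: "space Nspace = count_meas"
  unfolding Nspace_def by (rule space_measure_of) (auto simp del: Collect_mem_eq)

lemma sets_Nspace: "sets Nspace = sigma_sets count_meas {{\<eta>\<in>count_meas. emeasure \<eta> B \<in> A} | B A.
        B \<in> sets borel \<and> bounded B \<and> A \<in> sets (borel :: ennreal measure)}"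
  unfolding Nspace_def by (rule sets_measure_of) (auto simp del: Collect_mem_eq)

lemma count_meas_sets: "\<eta> \<in> count_meas \<Longrightarrow> sets \<eta> = sets borel"
  unfolding count_meas_def by (drule CollectD) (erule conjunct1)

lemma count_meas_space: "\<eta> \<in> count_meas \<Longrightarrow> space \<eta> = UNIV"
  using sets_eq_imp_space_eq[OF count_meas_sets] by simp

lemma count_meas_fin: "\<eta> \<in> count_meas \<Longrightarrow> B \<in> sets borel \<Longrightarrow> bounded B \<Longrightarrow> emeasure \<eta> B < \<infinity>"
proof -
  assume "\<eta> \<in> count_meas" "B \<in> sets borel" "bounded B"
  then obtain n :: nat where "emeasure \<eta> B = of_nat n" unfolding count_meas_def by blast
  then show ?thesis by (simp add: of_nat_less_top)
qed

lemma meas_emeasure_bounded: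
  fixes B :: "'a::polish_space set"
  assumes "B \<in> sets borel" "bounded B"
  shows "(\<lambda>\<eta>. emeasure \<eta> B) \<in> borel_measurable Nspace"
proof (rule measurableI)
  fix A :: "ennreal set" assume "A \<in> sets borel"
  then have "(\<lambda>\<eta>. emeasure \<eta> B) -` A \<inter> space Nspace = {\<eta>\<in>count_meas. emeasure \<eta> B \<in> A}"
    by (auto simp: space_Nspace)
  also have "\<dots> \<in> sets Nspace" unfolding sets_Nspace
    using assms \<open>A \<in> sets borel\<close> by (intro sigma_sets.Basic) blast
  finally show "(\<lambda>\<eta>. emeasure \<eta> B) -` A \<inter> space Nspace \<in> sets Nspace" .
next
  fix x :: "'a measure" assume "x \<in> space Nspace"
  then show "emeasure x B \<in> space borel" by simp
qed

lemma borel_eq_sigma_bounded: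
  "sets (borel :: 'a::polish_space measure) = sigma_sets UNIV {A \<in> sets borel. bounded A}"
proof
  show "sigma_sets UNIV {A \<in> sets borel. bounded A} \<subseteq> sets (borel :: 'a measure)"
    using sets.sigma_sets_subset[of "{A \<in> sets borel. bounded A}" "borel :: 'a measure"] by auto
next
  obtain x0 :: 'a where True by auto
  show "sets (borel :: 'a measure) \<subseteq> sigma_sets UNIV {A \<in> sets borel. bounded A}"
  proof
    fix A :: "'a set" assume A: "A \<in> sets borel"
    have "A = (\<Union>n::nat. A \<inter> ball x0 (real n))"
    proof (intro equalityI subsetI)
      fix x assume "x \<in> A"
      obtain n :: nat where "dist x0 x < real n" using reals_Archimedean2 by blast
      then show "x \<in> (\<Union>n::nat. A \<inter> ball x0 (real n))" using \<open>x \<in> A\<close> by auto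
    qed auto
    moreover have "(\<Union>n::nat. A \<inter> ball x0 (real n)) \<in> sigma_sets UNIV {A \<in> sets borel. bounded A}"
      using A by (intro sigma_sets.Union sigma_sets.Basic) auto
    ultimately show "A \<in> sigma_sets UNIV {A \<in> sets borel. bounded A}" by simp
  qed
qed


lemma meas_emeasure:
  fixes A :: "'a::polish_space set"
  assumes A: "A \<in> sets borel"
  shows "(\<lambda>\<eta>. emeasure \<eta> A) \<in> borel_measurable Nspace"
proof -
  obtain x0 :: 'a where True by auto
  define Bn where "Bn n = ball x0 (real n)" for n :: nat
  have Bn: "Bn n \<in> sets borel" "bounded (Bn n)" for n by (auto simp: Bn_def)
  have sN: "sets \<eta> = sets borel" if "\<eta> \<in> space Nspace" for \<eta> :: "'a measure"
    using that count_meas_sets space_Nspace by blast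
  have trunc: "(\<lambda>\<eta>. emeasure \<eta> (C \<inter> Bn n)) \<in> borel_measurable Nspace" if C: "C \<in> sets borel" for C n
  proof -
    have IS: "Int_stable {A \<in> sets (borel :: 'a measure). bounded A}"
      by (auto simp: Int_stable_def intro: bounded_Int)
    moreover have cl: "{A \<in> sets (borel :: 'a measure). bounded A} \<subseteq> Pow UNIV" by auto
    moreover have "C \<in> sigma_sets UNIV {A \<in> sets borel. bounded A}" using C borel_eq_sigma_bounded by blast
    ultimately show ?thesis
    proof (induction rule: sigma_sets_induct_disjoint)
      case (basic A) then show ?case using Bn by (intro meas_emeasure_bounded) (auto intro: bounded_Int)
    next
      case empty then show ?case by simp
    next
      case (compl A)
      have Ab: "A \<in> sets borel" using compl.hyps borel_eq_sigma_bounded by blast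
      have eq: "emeasure \<eta> ((UNIV - A) \<inter> Bn n) = emeasure \<eta> (Bn n) - emeasure \<eta> (A \<inter> Bn n)"
        if "\<eta> \<in> space Nspace" for \<eta>
      proof -
        have s: "sets \<eta> = sets borel" using sN that .
        have "(UNIV - A) \<inter> Bn n = Bn n - (A \<inter> Bn n)" by auto
        moreover have "emeasure \<eta> (A \<inter> Bn n) \<noteq> \<infinity>"
          using count_meas_fin[of \<eta> "A \<inter> Bn n"] that Ab Bn bounded_Int[of "Bn n" A] by (auto simp: space_Nspace Int_commute)
        ultimately show ?thesis using Ab Bn s by (simp add: emeasure_Diff)
      qed
      have "(\<lambda>\<eta>. emeasure \<eta> (Bn n) - emeasure \<eta> (A \<inter> Bn n)) \<in> borel_measurable Nspace"
        using compl.IH meas_emeasure_bounded[OF Bn] by measurable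
      then show ?case by (rule measurable_cong[THEN iffD1, rotated]) (simp add: eq)
    next
      case (union A)
      have Ab: "A i \<in> sets borel" for i using union.hyps(2) borel_eq_sigma_bounded by blast
      have eq: "emeasure \<eta> ((\<Union>i. A i) \<inter> Bn n) = (\<Sum>i. emeasure \<eta> (A i \<inter> Bn n))"
        if "\<eta> \<in> space Nspace" for \<eta>
      proof -
        have s: "sets \<eta> = sets borel" using sN that .
        have d: "disjoint_family (\<lambda>i. A i \<inter> Bn n)"
          using union.hyps(1) unfolding disjoint_family_on_def by auto
        have "(\<Union>i. A i) \<inter> Bn n = (\<Union>i. A i \<inter> Bn n)" by auto
        moreover have "range (\<lambda>i. A i \<inter> Bn n) \<subseteq> sets \<eta>" using Ab Bn s by auto
        ultimately show ?thesis using suminf_emeasure[of "\<lambda>i. A i \<inter> Bn n" \<eta>, OF _ d] by simp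
      qed
      have "(\<lambda>\<eta>. \<Sum>i. emeasure \<eta> (A i \<inter> Bn n)) \<in> borel_measurable Nspace"
        using union.IH by measurable
      then show ?case by (rule measurable_cong[THEN iffD1, rotated]) (simp add: eq)
    qed
  qed
  have eq: "emeasure \<eta> A = (SUP n. emeasure \<eta> (A \<inter> Bn n))" if "\<eta> \<in> space Nspace" for \<eta>
  proof -
    have s: "sets \<eta> = sets borel" using sN that .
    have inc: "incseq (\<lambda>n. A \<inter> Bn n)"
      unfolding incseq_def Bn_def by auto
    have U: "(\<Union>n. A \<inter> Bn n) = A"
    proof (intro equalityI subsetI)
      fix x assume "x \<in> A"
      obtain n :: nat where "dist x0 x < real n" using reals_Archimedean2 by blast
      then show "x \<in> (\<Union>n. A \<inter> Bn n)" using \<open>x \<in> A\<close> by (auto simp: Bn_def)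
    qed auto
    have "range (\<lambda>n. A \<inter> Bn n) \<subseteq> sets \<eta>" using A Bn s by auto
    then show ?thesis using SUP_emeasure_incseq[of "\<lambda>n. A \<inter> Bn n" \<eta>, OF _ inc] U by simp
  qed
  have "(\<lambda>\<eta>. SUP n. emeasure \<eta> (A \<inter> Bn n)) \<in> borel_measurable Nspace"
    using trunc[OF A] by measurable
  then show ?thesis by (rule measurable_cong[THEN iffD1, rotated]) (simp add: eq)
qed

lemma meas_congI:
  assumes "\<And>x. x \<in> space M \<Longrightarrow> f x = g x" "g \<in> measurable M N"
  shows "f \<in> measurable M N"
  using measurable_cong[of M f g N] assms by blast

lemma count_meas_measurable:
  assumes "\<eta> \<in> count_meas" "u \<in> borel_measurable borel"
  shows "u \<in> borel_measurable \<eta>"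
  by (subst measurable_cong_sets[OF count_meas_sets[OF assms(1)] refl]) (rule assms(2))

lemma meas_integral:
  fixes g :: "'a::polish_space \<Rightarrow> ennreal"
  assumes g: "g \<in> borel_measurable borel"
  shows "(\<lambda>\<eta>. \<integral>\<^sup>+ x. g x \<partial>\<eta>) \<in> borel_measurable Nspace"
  using g
proof (induction rule: borel_measurable_induct)
  case (cong f g)
  then have "f = g" by auto
  then show ?case using cong by simp
next
  case (set A)
  have eq: "(\<integral>\<^sup>+ x. indicator A x \<partial>\<eta>) = emeasure \<eta> A" if "\<eta> \<in> space Nspace" for \<eta> :: "'a measure"
    using that set count_meas_sets[of \<eta>] by (simp add: space_Nspace)
  show ?case by (rule meas_congI[OF eq meas_emeasure[OF set]])
next
  case (mult u c)
  have eq: "(\<integral>\<^sup>+ x. c * u x \<partial>\<eta>) = c * (\<integral>\<^sup>+ x. u x \<partial>\<eta>)" if "\<eta> \<in> space Nspace" for \<eta> :: "'a measure"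
  proof -
    have "u \<in> borel_measurable \<eta>"
      using mult.hyps(2) count_meas_measurable that[unfolded space_Nspace] by blast
    then show ?thesis by (rule nn_integral_cmult)
  qed
  have m: "(\<lambda>\<eta>. c * (\<integral>\<^sup>+ x. u x \<partial>\<eta>)) \<in> borel_measurable Nspace" using mult.IH by measurable
  show ?case by (rule meas_congI[OF eq m])
next
  case (add u v)
  have eq: "(\<integral>\<^sup>+ x. v x + u x \<partial>\<eta>) = (\<integral>\<^sup>+ x. v x \<partial>\<eta>) + (\<integral>\<^sup>+ x. u x \<partial>\<eta>)" if "\<eta> \<in> space Nspace" for \<eta> :: "'a measure"
  proof -
    have "u \<in> borel_measurable \<eta>" "v \<in> borel_measurable \<eta>"
      using add.hyps count_meas_measurable that[unfolded space_Nspace] by blast+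
    then show ?thesis by (intro nn_integral_add) auto
  qed
  have m: "(\<lambda>\<eta>. (\<integral>\<^sup>+ x. v x \<partial>\<eta>) + (\<integral>\<^sup>+ x. u x \<partial>\<eta>)) \<in> borel_measurable Nspace"
    using add.IH by measurable
  show ?case by (rule meas_congI[OF eq m])
next
  case (seq U)
  have eq: "(\<integral>\<^sup>+ x. (SUP i. U i) x \<partial>\<eta>) = (SUP i. \<integral>\<^sup>+ x. U i x \<partial>\<eta>)" if "\<eta> \<in> space Nspace" for \<eta> :: "'a measure"
  proof -
    have "U i \<in> borel_measurable \<eta>" for i
      using seq.hyps count_meas_measurable that[unfolded space_Nspace] by blast
    then show ?thesis using seq.hyps unfolding SUP_apply
      by (intro nn_integral_monotone_convergence_SUP) auto
  qed
  have m: "(\<lambda>\<eta>. SUP i. \<integral>\<^sup>+ x. U i x \<partial>\<eta>) \<in> borel_measurable Nspace"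
    using seq.IH by measurable
  show ?case by (rule meas_congI[OF eq m])
qed

lemma exp_neg_le1: "exp_neg t \<le> 1"
  unfolding exp_neg_def by (auto simp: enn2real_nonneg)

lemma exp_neg_pos: "t \<noteq> \<infinity> \<Longrightarrow> 0 < exp_neg t"
  unfolding exp_neg_def by auto

lemma exp_neg_fin: "exp_neg t < \<infinity>"
  using exp_neg_le1[of t] by (simp add: le_less_trans)

lemma exp_neg_add:
  assumes r: "0 \<le> r"
  shows "exp_neg (t + ennreal r) = exp_neg t * ennreal (exp (- r))"
proof (cases "t = \<infinity>")
  case True
  then show ?thesis by (simp add: exp_neg_def)
next
  case False
  then obtain s where s: "0 \<le> s" "t = ennreal s" by (cases t) auto
  have "t + ennreal r = ennreal (s + r)" using s r by (simp add: ennreal_plus)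
  then show ?thesis using s r
    by (simp add: exp_neg_def exp_add[symmetric] ennreal_mult[symmetric] del: ennreal_plus)
qed

lemma exp_neg_meas[measurable]: "exp_neg \<in> borel_measurable borel"
  unfolding exp_neg_def by measurable

lemma add_point_sets: "sets (add_point \<eta> x) = sets (borel :: 'a::polish_space measure)"
  unfolding add_point_def
  by (subst sets_measure_of) (auto simp: sets.sigma_sets_eq[of borel, simplified])

lemma emeasure_add_point:
  fixes \<eta> :: "'a::polish_space measure"
  assumes eta: "\<eta> \<in> count_meas" and A: "A \<in> sets borel"
  shows "emeasure (add_point \<eta> x) A = emeasure \<eta> A + indicator A x"
proof -
  have s: "sets \<eta> = sets borel" using count_meas_sets[OF eta] .
  have sa: "sigma_algebra UNIV (sets (borel::'a measure))"
    using sets.sigma_algebra_axioms[of borel] by simp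
  have pos: "positive (sets borel) (\<lambda>A. emeasure \<eta> A + indicator A x)"
    unfolding positive_def by simp
  have ca: "countably_additive (sets borel) (\<lambda>A. emeasure \<eta> A + indicator A x)"
    unfolding countably_additive_def
  proof (intro allI impI)
    fix F :: "nat \<Rightarrow> 'a set" assume F: "range F \<subseteq> sets borel" "disjoint_family F" "\<Union> (range F) \<in> sets borel"
    have "(\<Sum>i. emeasure \<eta> (F i) + indicator (F i) x) = (\<Sum>i. emeasure \<eta> (F i)) + (\<Sum>i. indicator (F i) x :: ennreal)"
      by (rule suminf_add[OF summableI summableI, symmetric])
    also have "(\<Sum>i. emeasure \<eta> (F i)) = emeasure \<eta> (\<Union>i. F i)"
      using F s by (intro suminf_emeasure) auto
    also have "(\<Sum>i. indicator (F i) x :: ennreal) = indicator (\<Union>i. F i) x"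
      using F by (intro suminf_indicator) auto
    finally show "(\<Sum>i. emeasure \<eta> (F i) + indicator (F i) x) = emeasure \<eta> (\<Union> (range F)) + indicator (\<Union> (range F)) x" .
  qed
  show ?thesis unfolding add_point_def
    by (rule emeasure_measure_of_sigma[OF sa pos ca A])
qed

lemma add_point_count:
  fixes \<eta> :: "'a::polish_space measure"
  assumes eta: "\<eta> \<in> count_meas"
  shows "add_point \<eta> x \<in> count_meas"
proof -
  have "\<exists>n::nat. emeasure (add_point \<eta> x) B = of_nat n" if B: "B \<in> sets borel" "bounded B" for B
  proof -
    obtain n :: nat where n: "emeasure \<eta> B = of_nat n"
      using eta B unfolding count_meas_def by blast
    show ?thesis
    proof (cases "x \<in> B")
      case True
      then show ?thesis using n emeasure_add_point[OF eta B(1), of x]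
        by (intro exI[of _ "Suc n"]) (simp add: add.commute)
    next
      case False
      then show ?thesis using n emeasure_add_point[OF eta B(1), of x]
        by (intro exI[of _ n]) simp
    qed
  qed
  then show ?thesis unfolding count_meas_def mem_Collect_eq using add_point_sets[of \<eta> x] by blast
qed

lemma integral_add_point:
  fixes \<eta> :: "'a::polish_space measure"
  assumes eta: "\<eta> \<in> count_meas" and g: "g \<in> borel_measurable borel"
  shows "(\<integral>\<^sup>+ y. g y \<partial>add_point \<eta> x) = (\<integral>\<^sup>+ y. g y \<partial>\<eta>) + g x"
  using g
proof (induction rule: borel_measurable_induct)
  case (cong f g)
  then have "f = g" by auto
  then show ?case using cong by simp
next
  case (set A)
  then show ?case using emeasure_add_point[OF eta set] count_meas_sets[OF eta] add_point_sets[of \<eta> x]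
    by simp
next
  case (mult u c)
  have m1: "u \<in> borel_measurable (add_point \<eta> x)"
    using count_meas_measurable[OF add_point_count[OF eta] mult.hyps(2)] .
  have m2: "u \<in> borel_measurable \<eta>"
    using count_meas_measurable[OF eta mult.hyps(2)] .
  show ?case using mult.IH
    by (simp add: nn_integral_cmult[OF m1] nn_integral_cmult[OF m2] distrib_left)
next
  case (add u v)
  have m: "u \<in> borel_measurable (add_point \<eta> x)" "v \<in> borel_measurable (add_point \<eta> x)"
    "u \<in> borel_measurable \<eta>" "v \<in> borel_measurable \<eta>"
    using count_meas_measurable[OF add_point_count[OF eta]] count_meas_measurable[OF eta] add.hyps
    by blast+
  show ?case using add.IH
    by (simp add: nn_integral_add m ac_simps)
next
  case (seq U)
  have m: "U i \<in> borel_measurable (add_point \<eta> x)" "U i \<in> borel_measurable \<eta>" for i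
    using count_meas_measurable[OF add_point_count[OF eta]] count_meas_measurable[OF eta] seq.hyps
    by blast+
  have inc1: "incseq (\<lambda>i. \<integral>\<^sup>+ y. U i y \<partial>\<eta>)"
    using seq.hyps unfolding incseq_def by (auto intro!: nn_integral_mono simp: le_fun_def)
  have inc2: "incseq (\<lambda>i. U i x)"
    using seq.hyps unfolding incseq_def by (auto simp: le_fun_def)
  have "(\<integral>\<^sup>+ y. (SUP i. U i) y \<partial>add_point \<eta> x) = (SUP i. \<integral>\<^sup>+ y. U i y \<partial>add_point \<eta> x)"
    unfolding SUP_apply using m seq.hyps by (intro nn_integral_monotone_convergence_SUP) auto
  also have "\<dots> = (SUP i. (\<integral>\<^sup>+ y. U i y \<partial>\<eta>) + U i x)" using seq.IH by simp
  also have "\<dots> = (SUP i. \<integral>\<^sup>+ y. U i y \<partial>\<eta>) + (SUP i. U i x)"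
    by (rule ennreal_SUP_add[OF inc1 inc2])
  also have "(SUP i. \<integral>\<^sup>+ y. U i y \<partial>\<eta>) = (\<integral>\<^sup>+ y. (SUP i. U i) y \<partial>\<eta>)"
    unfolding SUP_apply using m seq.hyps by (intro nn_integral_monotone_convergence_SUP[symmetric]) auto
  finally show ?case by (simp only: SUP_apply)
qed

lemma nn_integral_density_nm:
  fixes d :: "'a \<Rightarrow> ennreal"
  assumes d: "d \<in> borel_measurable M" "\<And>x. d x < \<infinity>"
  shows "(\<integral>\<^sup>+ x. g x \<partial>density M d) = (\<integral>\<^sup>+ x. d x * g x \<partial>M)"
proof (rule antisym)
  show "(\<integral>\<^sup>+ x. g x \<partial>density M d) \<le> (\<integral>\<^sup>+ x. d x * g x \<partial>M)"
    unfolding nn_integral_def[of "density M d"]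
  proof (rule SUP_least)
    fix s assume "s \<in> {s. simple_function (density M d) s \<and> s \<le> g}"
    then have s: "simple_function (density M d) s" "s \<le> g" by auto
    have sm: "s \<in> borel_measurable M"
      using borel_measurable_simple_function[OF s(1)] by simp
    have "integral\<^sup>S (density M d) s = (\<integral>\<^sup>+ x. s x \<partial>density M d)"
      by (rule nn_integral_eq_simple_integral[symmetric, OF s(1)])
    also have "\<dots> = (\<integral>\<^sup>+ x. d x * s x \<partial>M)" by (rule nn_integral_density[OF d(1) sm])
    also have "\<dots> \<le> (\<integral>\<^sup>+ x. d x * g x \<partial>M)"
      using s(2) by (intro nn_integral_mono mult_left_mono) (auto simp: le_fun_def)
    finally show "integral\<^sup>S (density M d) s \<le> (\<integral>\<^sup>+ x. d x * g x \<partial>M)" .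
  qed
next
  show "(\<integral>\<^sup>+ x. d x * g x \<partial>M) \<le> (\<integral>\<^sup>+ x. g x \<partial>density M d)"
    unfolding nn_integral_def[of M]
  proof (rule SUP_least)
    fix t assume "t \<in> {t. simple_function M t \<and> t \<le> (\<lambda>x. d x * g x)}"
    then have t: "simple_function M t" "t \<le> (\<lambda>x. d x * g x)" by auto
    have tm: "t \<in> borel_measurable M" by (rule borel_measurable_simple_function[OF t(1)])
    define s where "s x = (if d x = 0 then 0 else t x / d x)" for x
    have sm: "s \<in> borel_measurable M" unfolding s_def using tm d(1) by measurable
    have ts: "t x = d x * s x" for x
    proof (cases "d x = 0")
      case True
      have "t x \<le> d x * g x" using t(2) le_funD by metis
      then have "t x \<le> 0" using True by simp
      then show ?thesis using True by (simp add: s_def)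
    next
      case False
      have "d x * (t x / d x) = t x * d x / d x"
        unfolding ennreal_times_divide by (rule arg_cong[where f="\<lambda>y. y / d x"]) (rule mult.commute)
      also have "\<dots> = t x" using False d(2)[of x] by (simp add: mult_divide_eq_ennreal)
      finally show ?thesis using False by (simp add: s_def)
    qed
    have sg: "s x \<le> g x" for x
    proof (cases "d x = 0")
      case True
      then show ?thesis by (simp add: s_def)
    next
      case False
      have "t x \<le> d x * g x" using t(2) by (auto simp: le_fun_def)
      then have "t x / d x \<le> d x * g x / d x" by (rule divide_right_mono_ennreal)
      also have "d x * g x / d x = g x * d x / d x"
        by (rule arg_cong[where f="\<lambda>y. y / d x"]) (rule mult.commute)
      also have "\<dots> = g x"
        using False d(2)[of x] by (simp add: mult_divide_eq_ennreal)
      finally show ?thesis using False by (simp add: s_def)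
    qed
    have "integral\<^sup>S M t = (\<integral>\<^sup>+ x. t x \<partial>M)"
      by (rule nn_integral_eq_simple_integral[symmetric, OF t(1)])
    also have "\<dots> = (\<integral>\<^sup>+ x. d x * s x \<partial>M)" by (simp add: ts)
    also have "\<dots> = (\<integral>\<^sup>+ x. s x \<partial>density M d)" by (rule nn_integral_density[OF d(1) sm, symmetric])
    also have "\<dots> \<le> (\<integral>\<^sup>+ x. g x \<partial>density M d)" using sg by (intro nn_integral_mono) auto
    finally show "integral\<^sup>S M t \<le> (\<integral>\<^sup>+ x. g x \<partial>density M d)" .
  qed
qed

lemma nn_integral_cmult_le_nm:
  fixes g :: "'a \<Rightarrow> ennreal"
  assumes r: "0 < r"
  shows "(\<integral>\<^sup>+ x. ennreal r * g x \<partial>M) \<le> ennreal r * (\<integral>\<^sup>+ x. g x \<partial>M)"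
  unfolding nn_integral_def[of M "\<lambda>x. ennreal r * g x"]
proof (rule SUP_least)
  fix t assume "t \<in> {t. simple_function M t \<and> t \<le> (\<lambda>x. ennreal r * g x)}"
  then have t: "simple_function M t" "t \<le> (\<lambda>x. ennreal r * g x)" by auto
  have tm: "t \<in> borel_measurable M" by (rule borel_measurable_simple_function[OF t(1)])
  define s where "s x = ennreal (1 / r) * t x" for x
  have sm: "s \<in> borel_measurable M" unfolding s_def using tm by measurable
  have ts: "t x = ennreal r * s x" for x
    using r by (simp add: s_def mult.assoc[symmetric] ennreal_mult[symmetric])
  have sg: "s x \<le> g x" for x
  proof -
    have "s x \<le> ennreal (1 / r) * (ennreal r * g x)"
      unfolding s_def using t(2) by (intro mult_left_mono) (auto simp: le_fun_def)
    also have "\<dots> = g x" using r by (simp add: mult.assoc[symmetric] ennreal_mult[symmetric])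
    finally show ?thesis .
  qed
  have "integral\<^sup>S M t = (\<integral>\<^sup>+ x. t x \<partial>M)"
    by (rule nn_integral_eq_simple_integral[symmetric, OF t(1)])
  also have "\<dots> = (\<integral>\<^sup>+ x. ennreal r * s x \<partial>M)" by (simp add: ts)
  also have "\<dots> = ennreal r * (\<integral>\<^sup>+ x. s x \<partial>M)" by (rule nn_integral_cmult[OF sm])
  also have "\<dots> \<le> ennreal r * (\<integral>\<^sup>+ x. g x \<partial>M)" using sg by (intro mult_left_mono nn_integral_mono) auto
  finally show "integral\<^sup>S M t \<le> ennreal r * (\<integral>\<^sup>+ x. g x \<partial>M)" .
qed

lemma nn_integral_cmult_nm:
  fixes g :: "'a \<Rightarrow> ennreal"
  assumes r: "0 < r"
  shows "(\<integral>\<^sup>+ x. ennreal r * g x \<partial>M) = ennreal r * (\<integral>\<^sup>+ x. g x \<partial>M)"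
proof (rule antisym)
  show "(\<integral>\<^sup>+ x. ennreal r * g x \<partial>M) \<le> ennreal r * (\<integral>\<^sup>+ x. g x \<partial>M)"
    by (rule nn_integral_cmult_le_nm[OF r])
next
  have r': "0 < 1 / r" using r by simp
  have "(\<integral>\<^sup>+ x. g x \<partial>M) = (\<integral>\<^sup>+ x. ennreal (1 / r) * (ennreal r * g x) \<partial>M)"
    using r by (simp add: mult.assoc[symmetric] ennreal_mult[symmetric])
  also have "\<dots> \<le> ennreal (1 / r) * (\<integral>\<^sup>+ x. ennreal r * g x \<partial>M)"
    by (rule nn_integral_cmult_le_nm[OF r'])
  finally have "ennreal r * (\<integral>\<^sup>+ x. g x \<partial>M) \<le> ennreal r * (ennreal (1 / r) * (\<integral>\<^sup>+ x. ennreal r * g x \<partial>M))"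
    by (rule mult_left_mono) simp
  also have "\<dots> = (\<integral>\<^sup>+ x. ennreal r * g x \<partial>M)"
    using r by (simp add: mult.assoc[symmetric] ennreal_mult[symmetric])
  finally show "ennreal r * (\<integral>\<^sup>+ x. g x \<partial>M) \<le> (\<integral>\<^sup>+ x. ennreal r * g x \<partial>M)" .
qed

theorem mainTheorem16:
  fixes lam :: "'a::polish_space measure"
    and v :: "'a \<Rightarrow> 'a \<Rightarrow> ennreal"
    and z h :: "'a \<Rightarrow> real"
    and P :: "'a measure measure"
  assumes lam_sets: "sets lam = sets borel"
    and lam_fin: "\<And>B. B \<in> sets borel \<Longrightarrow> bounded B \<Longrightarrow> emeasure lam B < \<infinity>"
    and v_meas: "(\<lambda>(x, y). v x y) \<in> borel_measurable (borel \<Otimes>\<^sub>M borel)"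
    and v_sym: "\<And>x y. v x y = v y x"
    and z_meas: "z \<in> borel_measurable borel"
    and z_nonneg: "\<And>x. z x \<ge> 0"
    and z_loc: "\<And>B. B \<in> sets borel \<Longrightarrow> bounded B \<Longrightarrow> (\<integral>\<^sup>+ x\<in>B. ennreal (z x) \<partial>lam) < \<infinity>"
    and P_Gibbs: "Gibbs v lam z P"
    and h_meas: "h \<in> borel_measurable borel"
    and h_nonneg: "\<And>x. h x \<ge> 0"
    and h_int: "(\<integral>\<^sup>+ x. ennreal (h x) * ennreal (z x) \<partial>lam) < \<infinity>"
  shows "Gibbs v lam (\<lambda>x. z x * exp (- h x))
           (density P (\<lambda>\<eta>. exp_neg (\<integral>\<^sup>+ x. ennreal (h x) \<partial>\<eta>) /
              (\<integral>\<^sup>+ \<gamma>. exp_neg (\<integral>\<^sup>+ x. ennreal (h x) \<partial>\<gamma>) \<partial>P)))"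
proof -
  have Pprob: "prob_space P" and Psets: "sets P = sets Nspace"
    using P_Gibbs unfolding Gibbs_def by blast+
  have GNZ: "\<And>F. (\<lambda>(x, \<eta>). F x \<eta>) \<in> borel_measurable (borel \<Otimes>\<^sub>M Nspace) \<Longrightarrow>
        (\<integral>\<^sup>+ \<eta>. (\<integral>\<^sup>+ x. F x \<eta> \<partial>\<eta>) \<partial>P) =
        (\<integral>\<^sup>+ x. (\<integral>\<^sup>+ \<eta>. F x (add_point \<eta> x) * exp_neg (Wpot v x \<eta>) \<partial>P) * ennreal (z x) \<partial>lam)"
    using P_Gibbs unfolding Gibbs_def by blast
  interpret P: prob_space P by (rule Pprob)
  have Pspace: "space P = count_meas"
    using sets_eq_imp_space_eq[OF Psets] space_Nspace by simp
  have measP: "g \<in> borel_measurable P" if "g \<in> borel_measurable Nspace" for g :: "'a measure \<Rightarrow> ennreal"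
    by (subst measurable_cong_sets[OF Psets refl]) (rule that)
  define Hn where "Hn \<eta> = (\<integral>\<^sup>+ x. ennreal (h x) \<partial>\<eta>)" for \<eta> :: "'a measure"
  define f where "f \<eta> = exp_neg (Hn \<eta>)" for \<eta>
  define c where "c = (\<integral>\<^sup>+ \<gamma>. f \<gamma> \<partial>P)"
  define d where "d \<eta> = f \<eta> / c" for \<eta>
  have Qeq: "(\<lambda>\<eta>. exp_neg (\<integral>\<^sup>+ x. ennreal (h x) \<partial>\<eta>) /
              (\<integral>\<^sup>+ \<gamma>. exp_neg (\<integral>\<^sup>+ x. ennreal (h x) \<partial>\<gamma>) \<partial>P)) = d"
    by (simp add: fun_eq_iff d_def f_def c_def Hn_def)
  have hm: "(\<lambda>x. ennreal (h x)) \<in> borel_measurable borel" using h_meas by measurable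
  have Hn_meas: "Hn \<in> borel_measurable Nspace"
    unfolding Hn_def by (rule meas_integral[OF hm])
  have f_meas: "f \<in> borel_measurable Nspace"
    unfolding f_def using Hn_meas by measurable
  have d_meas: "d \<in> borel_measurable Nspace"
    unfolding d_def divide_ennreal_def using f_meas by measurable
  have c_le: "c \<le> 1"
  proof -
    have "c \<le> (\<integral>\<^sup>+ \<gamma>. 1 \<partial>P)" unfolding c_def f_def
      by (intro nn_integral_mono exp_neg_le1)
    also have "\<dots> = 1" by (simp add: P.emeasure_space_1)
    finally show ?thesis .
  qed
  have Hn_fin: "(\<integral>\<^sup>+ \<eta>. Hn \<eta> \<partial>P) < \<infinity>"
  proof -
    have m: "(\<lambda>(x, \<eta>). ennreal (h x)) \<in> borel_measurable (borel \<Otimes>\<^sub>M (Nspace :: 'a measure measure))"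
    proof -
      have "(\<lambda>p. ennreal (h (fst p))) \<in> borel_measurable (borel \<Otimes>\<^sub>M (Nspace :: 'a measure measure))"
        using h_meas by measurable
      moreover have "(\<lambda>(x, \<eta>::'a measure). ennreal (h x)) = (\<lambda>p. ennreal (h (fst p)))" by auto
      ultimately show ?thesis by simp
    qed
    have "(\<integral>\<^sup>+ \<eta>. Hn \<eta> \<partial>P) = (\<integral>\<^sup>+ x. (\<integral>\<^sup>+ \<eta>. ennreal (h x) * exp_neg (Wpot v x \<eta>) \<partial>P) * ennreal (z x) \<partial>lam)"
      unfolding Hn_def using GNZ[of "\<lambda>x \<eta>. ennreal (h x)"] m by simp
    also have "\<dots> \<le> (\<integral>\<^sup>+ x. ennreal (h x) * ennreal (z x) \<partial>lam)"
    proof (intro nn_integral_mono mult_right_mono)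
      fix x
      have "(\<integral>\<^sup>+ \<eta>. ennreal (h x) * exp_neg (Wpot v x \<eta>) \<partial>P) \<le> (\<integral>\<^sup>+ \<eta>. ennreal (h x) \<partial>P)"
        using exp_neg_le1 by (intro nn_integral_mono) (metis mult.right_neutral mult_left_mono zero_le)
      also have "\<dots> = ennreal (h x)" by (simp add: P.emeasure_space_1)
      finally show "(\<integral>\<^sup>+ \<eta>. ennreal (h x) * exp_neg (Wpot v x \<eta>) \<partial>P) \<le> ennreal (h x)" .
    qed simp
    finally show ?thesis using h_int by (simp add: le_less_trans)
  qed
  have c_pos: "c \<noteq> 0"
  proof
    assume c0: "c = 0"
    have AE1: "AE \<eta> in P. Hn \<eta> \<noteq> \<infinity>"
      using nn_integral_PInf_AE[OF measP[OF Hn_meas]] Hn_fin by simp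
    have AE2: "AE \<eta> in P. f \<eta> = 0"
      using c0 nn_integral_0_iff_AE[OF measP[OF f_meas]] unfolding c_def by simp
    have "AE \<eta> in P. False"
      using AE1 AE2 by eventually_elim (use exp_neg_pos f_def in force)
    then show False by (simp add: P.AE_False)
  qed
  have c_fin: "c < \<infinity>" using c_le by (simp add: le_less_trans)
  have d_fin: "d \<eta> < \<infinity>" for \<eta>
    using c_pos exp_neg_fin[of "Hn \<eta>"] unfolding d_def f_def
    by (simp add: ennreal_divide_eq_top_iff less_top[symmetric])
  have d_add: "d (add_point \<eta> x) = d \<eta> * ennreal (exp (- h x))" if eta: "\<eta> \<in> count_meas" for \<eta> x
  proof -
    have "Hn (add_point \<eta> x) = Hn \<eta> + ennreal (h x)"
      unfolding Hn_def by (rule integral_add_point[OF eta hm])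
    then have "f (add_point \<eta> x) = f \<eta> * ennreal (exp (- h x))"
      unfolding f_def by (simp add: exp_neg_add h_nonneg)
    then show ?thesis unfolding d_def divide_ennreal_def by (simp add: ac_simps)
  qed
  have "Gibbs v lam (\<lambda>x. z x * exp (- h x)) (density P d)"
    unfolding Gibbs_def
  proof (intro conjI allI impI)
    show "prob_space (density P d)"
    proof (rule prob_spaceI)
      have "emeasure (density P d) (space (density P d)) = (\<integral>\<^sup>+ \<eta>. d \<eta> * indicator (space P) \<eta> \<partial>P)"
        by (simp add: emeasure_density measP[OF d_meas])
      also have "\<dots> = (\<integral>\<^sup>+ \<eta>. f \<eta> / c \<partial>P)"
        by (intro nn_integral_cong) (simp add: d_def)
      also have "\<dots> = c / c" unfolding c_def by (rule nn_integral_divide[OF measP[OF f_meas]])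
      also have "\<dots> = 1" using c_pos c_fin by simp
      finally show "emeasure (density P d) (space (density P d)) = 1" .
    qed
  next
    show "sets (density P d) = sets Nspace" by (simp add: Psets)
  next
    fix F :: "'a \<Rightarrow> 'a measure \<Rightarrow> ennreal"
    assume FM: "(\<lambda>(x, \<eta>). F x \<eta>) \<in> borel_measurable (borel \<Otimes>\<^sub>M Nspace)"
    have Fx: "(\<lambda>x. F x \<eta>) \<in> borel_measurable borel" if "\<eta> \<in> space Nspace" for \<eta>
    proof -
      have "(\<lambda>x. (\<lambda>(x, \<eta>). F x \<eta>) (x, \<eta>)) \<in> borel_measurable borel"
        using measurable_compose[OF measurable_Pair2'[OF that] FM] by simp
      then show ?thesis by simp
    qed
    have GM: "(\<lambda>(x, \<eta>). F x \<eta> * d \<eta>) \<in> borel_measurable (borel \<Otimes>\<^sub>M Nspace)"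
    proof -
      have "(\<lambda>p. (\<lambda>(x, \<eta>). F x \<eta>) p * d (snd p)) \<in> borel_measurable (borel \<Otimes>\<^sub>M Nspace)"
        using FM d_meas by measurable
      moreover have "(\<lambda>p. (\<lambda>(x, \<eta>). F x \<eta>) p * d (snd p)) = (\<lambda>(x, \<eta>). F x \<eta> * d \<eta>)" by auto
      ultimately show ?thesis by simp
    qed
    have "(\<integral>\<^sup>+ \<eta>. (\<integral>\<^sup>+ x. F x \<eta> \<partial>\<eta>) \<partial>density P d) = (\<integral>\<^sup>+ \<eta>. d \<eta> * (\<integral>\<^sup>+ x. F x \<eta> \<partial>\<eta>) \<partial>P)"
      by (rule nn_integral_density_nm[OF measP[OF d_meas] d_fin])
    also have "\<dots> = (\<integral>\<^sup>+ \<eta>. (\<integral>\<^sup>+ x. F x \<eta> * d \<eta> \<partial>\<eta>) \<partial>P)"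
    proof (intro nn_integral_cong)
      fix \<eta> assume "\<eta> \<in> space P"
      then have eta: "\<eta> \<in> count_meas" and "\<eta> \<in> space Nspace" using Pspace space_Nspace by auto
      then have "(\<lambda>x. F x \<eta>) \<in> borel_measurable \<eta>" using count_meas_measurable Fx by blast
      then show "d \<eta> * (\<integral>\<^sup>+ x. F x \<eta> \<partial>\<eta>) = (\<integral>\<^sup>+ x. F x \<eta> * d \<eta> \<partial>\<eta>)"
        using nn_integral_cmult[of "\<lambda>x. F x \<eta>" \<eta> "d \<eta>"] by (simp add: ac_simps)
    qed
    also have "\<dots> = (\<integral>\<^sup>+ x. (\<integral>\<^sup>+ \<eta>. F x (add_point \<eta> x) * d (add_point \<eta> x) * exp_neg (Wpot v x \<eta>) \<partial>P) * ennreal (z x) \<partial>lam)"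
      using GNZ[of "\<lambda>x \<eta>. F x \<eta> * d \<eta>", OF GM] by simp
    also have "\<dots> = (\<integral>\<^sup>+ x. (\<integral>\<^sup>+ \<eta>. F x (add_point \<eta> x) * exp_neg (Wpot v x \<eta>) \<partial>density P d) * ennreal (z x * exp (- h x)) \<partial>lam)"
    proof (intro nn_integral_cong)
      fix x
      have "(\<integral>\<^sup>+ \<eta>. F x (add_point \<eta> x) * d (add_point \<eta> x) * exp_neg (Wpot v x \<eta>) \<partial>P)
          = (\<integral>\<^sup>+ \<eta>. ennreal (exp (- h x)) * (d \<eta> * (F x (add_point \<eta> x) * exp_neg (Wpot v x \<eta>))) \<partial>P)"
      proof (intro nn_integral_cong)
        fix \<eta> assume "\<eta> \<in> space P"
        then have eta: "\<eta> \<in> count_meas" using Pspace by simp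
        show "F x (add_point \<eta> x) * d (add_point \<eta> x) * exp_neg (Wpot v x \<eta>)
          = ennreal (exp (- h x)) * (d \<eta> * (F x (add_point \<eta> x) * exp_neg (Wpot v x \<eta>)))"
          by (simp add: d_add[OF eta] ac_simps)
      qed
      also have "\<dots> = ennreal (exp (- h x)) * (\<integral>\<^sup>+ \<eta>. d \<eta> * (F x (add_point \<eta> x) * exp_neg (Wpot v x \<eta>)) \<partial>P)"
        by (rule nn_integral_cmult_nm) simp
      also have "(\<integral>\<^sup>+ \<eta>. d \<eta> * (F x (add_point \<eta> x) * exp_neg (Wpot v x \<eta>)) \<partial>P)
          = (\<integral>\<^sup>+ \<eta>. F x (add_point \<eta> x) * exp_neg (Wpot v x \<eta>) \<partial>density P d)"
        by (rule nn_integral_density_nm[OF measP[OF d_meas] d_fin, symmetric])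
      finally show "(\<integral>\<^sup>+ \<eta>. F x (add_point \<eta> x) * d (add_point \<eta> x) * exp_neg (Wpot v x \<eta>) \<partial>P) * ennreal (z x)
          = (\<integral>\<^sup>+ \<eta>. F x (add_point \<eta> x) * exp_neg (Wpot v x \<eta>) \<partial>density P d) * ennreal (z x * exp (- h x))"
        using z_nonneg[of x] by (simp add: ennreal_mult ac_simps)
    qed
    finally show "(\<integral>\<^sup>+ \<eta>. (\<integral>\<^sup>+ x. F x \<eta> \<partial>\<eta>) \<partial>density P d) =
        (\<integral>\<^sup>+ x. (\<integral>\<^sup>+ \<eta>. F x (add_point \<eta> x) * exp_neg (Wpot v x \<eta>) \<partial>density P d) * ennreal (z x * exp (- h x)) \<partial>lam)" .
  qed
  then show ?thesis unfolding Qeq .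
qed

end
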